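(* For every positive integer $k$ there exists $n_0$ such that for all $n\ge n_0$, $$\mathrm{exa}_k(n,K_3)=\left\lfloor \frac{(n-1)^2}{4}\right\rfloor+k+1.$$
   Context: For a graph $H$ and a graph $F$, $\mathcal N(H,F)$ denotes the number of subgraphs of $H$ isomorphic to $F$. For a nonnegative integer $k$, $\mathrm{exa}_k(n,F)$ is the largest number of edges of a simple graph $H$ on $n$ vertices with $\mathcal N(H,F)=k$. $K_3$ is the triangle. *)

theory Defs
  imports Complex_Main
begin

definition simple_graph :: "'a set \<Rightarrow> 'a set set \<Rightarrow> bool" where
  "simple_graph V E \<longleftrightarrow> finite V \<and> (\<forall>e\<in>E. e \<subseteq> V \<and> card e = 2)"

definition graph_iso :: "'a set \<Rightarrow> 'a set set \<Rightarrow> 'b set \<Rightarrow> 'b set set \<Rightarrow> bool" where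
  "graph_iso V1 E1 V2 E2 \<longleftrightarrow>
     (\<exists>f. bij_betw f V1 V2 \<and> (\<forall>u\<in>V1. \<forall>v\<in>V1. {u, v} \<in> E1 \<longleftrightarrow> {f u, f v} \<in> E2))"

definition count_copies :: "'a set \<Rightarrow> 'a set set \<Rightarrow> 'b set \<Rightarrow> 'b set set \<Rightarrow> nat" where
  "count_copies V E VF EF =
     card {(V', E'). V' \<subseteq> V \<and> E' \<subseteq> E \<and> (\<forall>e\<in>E'. e \<subseteq> V') \<and> graph_iso V' E' VF EF}"

definition exa_candidates :: "nat \<Rightarrow> nat \<Rightarrow> 'b set \<Rightarrow> 'b set set \<Rightarrow> nat set" where
  "exa_candidates k n VF EF =
     {card E | E. simple_graph {..<n} E \<and> count_copies {..<n} E VF EF = k}"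

definition exa :: "nat \<Rightarrow> nat \<Rightarrow> 'b set \<Rightarrow> 'b set set \<Rightarrow> nat" where
  "exa k n VF EF = Max (exa_candidates k n VF EF)"

definition K3_V :: "nat set" where "K3_V = {0, 1, 2}"
definition K3_E :: "nat set set" where "K3_E = {{0, 1}, {0, 2}, {1, 2}}"

end

theory Submission
  imports Defs
begin


definition tri :: "'a set set \<Rightarrow> 'a set set" where
  "tri E = {T. \<exists>a b c. T = {a,b,c} \<and> a\<noteq>b \<and> a\<noteq>c \<and> b\<noteq>c \<and> {a,b}\<in>E \<and> {a,c}\<in>E \<and> {b,c}\<in>E}"

definition P2 :: "'a set \<Rightarrow> 'a set set" where
  "P2 T = {e. e \<subseteq> T \<and> card e = 2}"

lemma P2_three:
  assumes "a\<noteq>b" "a\<noteq>c" "b\<noteq>c"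
  shows "P2 {a,b,c} = {{a,b},{a,c},{b,c}}"
proof
  show "P2 {a,b,c} \<subseteq> {{a,b},{a,c},{b,c}}"
  proof
    fix e assume "e \<in> P2 {a,b,c}"
    then have e: "e \<subseteq> {a,b,c}" "card e = 2" by (auto simp: P2_def)
    then obtain x y where xy: "e = {x,y}" "x\<noteq>y" by (auto simp: card_2_iff)
    with e show "e \<in> {{a,b},{a,c},{b,c}}" by auto
  qed
next
  show "{{a,b},{a,c},{b,c}} \<subseteq> P2 {a,b,c}" using assms by (auto simp: P2_def)
qed

lemma K3_E_iff: "x \<in> {0,1,2::nat} \<Longrightarrow> y \<in> {0,1,2} \<Longrightarrow> {x,y} \<in> K3_E \<longleftrightarrow> x \<noteq> y"
  unfolding K3_E_def
  apply (simp only: insert_iff empty_iff)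
  apply (elim disjE)
  apply (simp_all add: doubleton_eq_iff)
  done

lemma tri_edge_iff:
  assumes "a\<noteq>b" "a\<noteq>c" "b\<noteq>c" "u \<in> {a,b,c}" "v \<in> {a,b,c}"
  shows "{u,v} \<in> {{a,b},{a,c},{b,c}} \<longleftrightarrow> u \<noteq> v"
  using assms
  apply (simp only: insert_iff empty_iff)
  apply (elim disjE)
  apply (simp_all add: doubleton_eq_iff)
  done

lemma count_tri:
  assumes sg: "simple_graph V E"
  shows "count_copies V E K3_V K3_E = card (tri E)"
proof -
  let ?S = "{(V', E'). V' \<subseteq> V \<and> E' \<subseteq> E \<and> (\<forall>e\<in>E'. e \<subseteq> V') \<and> graph_iso V' E' K3_V K3_E}"
  have "?S = (\<lambda>T. (T, P2 T)) ` tri E"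
  proof
    show "?S \<subseteq> (\<lambda>T. (T, P2 T)) ` tri E"
    proof
      fix p assume "p \<in> ?S"
      then obtain V' E' where p: "p = (V',E')" and h: "V' \<subseteq> V" "E' \<subseteq> E" "\<forall>e\<in>E'. e \<subseteq> V'"
        "graph_iso V' E' K3_V K3_E" by blast
      then obtain f where f: "bij_betw f V' {0,1,2}" "\<forall>u\<in>V'. \<forall>v\<in>V'. {u, v} \<in> E' \<longleftrightarrow> {f u, f v} \<in> K3_E"
        unfolding graph_iso_def K3_V_def by blast
      have "card V' = 3" using bij_betw_same_card[OF f(1)] by simp
      then obtain a b c where abc: "V' = {a,b,c}" "a\<noteq>b" "b\<noteq>c" "a\<noteq>c" by (auto simp: card_3_iff)
      have fV: "f ` V' = {0,1,2}" using f(1) by (simp add: bij_betw_def)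
      have fim: "f u \<in> {0,1,2}" if "u \<in> V'" for u
      proof -
        have "f u \<in> f ` V'" using that by (rule imageI)
        then show ?thesis by (simp only: fV)
      qed
      have edge: "{u,v} \<in> E'" if "u\<in>V'" "v\<in>V'" "u\<noteq>v" for u v
      proof -
        have "f u \<noteq> f v" using inj_on_eq_iff[OF bij_betw_imp_inj_on[OF f(1)]] that by blast
        then have "{f u, f v} \<in> K3_E" using K3_E_iff[OF fim[OF that(1)] fim[OF that(2)]] by simp
        then show ?thesis using f(2) that(1,2) by simp
      qed
      have E'eq: "E' = P2 V'"
      proof
        show "E' \<subseteq> P2 V'" using h sg by (auto simp: P2_def simple_graph_def)
        have "P2 V' = {{a,b},{a,c},{b,c}}" using abc P2_three by simp
        then show "P2 V' \<subseteq> E'" using edge[of a b] edge[of a c] edge[of b c] abc by simp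
      qed
      have "V' \<in> tri E" using edge abc h(2) unfolding tri_def by blast
      then show "p \<in> (\<lambda>T. (T, P2 T)) ` tri E" using p E'eq by blast
    qed
  next
    show "(\<lambda>T. (T, P2 T)) ` tri E \<subseteq> ?S"
    proof
      fix p assume "p \<in> (\<lambda>T. (T, P2 T)) ` tri E"
      then obtain a b c where p: "p = ({a,b,c}, P2 {a,b,c})" and d: "a\<noteq>b" "a\<noteq>c" "b\<noteq>c"
        and ed: "{a,b}\<in>E" "{a,c}\<in>E" "{b,c}\<in>E" unfolding tri_def by blast
      have P: "P2 {a,b,c} = {{a,b},{a,c},{b,c}}" using P2_three[OF d] .
      have EV: "\<forall>e\<in>E. e \<subseteq> V" using sg by (simp add: simple_graph_def)
      have "{a,b} \<subseteq> V" "{b,c} \<subseteq> V" using EV ed by blast+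
      then have sub: "{a,b,c} \<subseteq> V" by blast
      define f where "f = (\<lambda>x. if x = a then 0 else if x = b then 1 else (2::nat))"
      have "inj_on f {a,b,c}" using d by (auto simp: inj_on_def f_def)
      moreover have "f ` {a,b,c} = {0,1,2}" using d by (simp add: f_def insert_commute)
      ultimately have bij: "bij_betw f {a,b,c} {0,1,2}" by (simp add: bij_betw_def)
      have fim: "f u \<in> {0,1,2}" for u by (simp add: f_def)
      have finj: "f u = f v \<longleftrightarrow> u = v" if "u \<in> {a,b,c}" "v \<in> {a,b,c}" for u v
        using inj_on_eq_iff[OF \<open>inj_on f {a,b,c}\<close> that] .
      have iso: "\<forall>u\<in>{a,b,c}. \<forall>v\<in>{a,b,c}. {u, v} \<in> P2 {a,b,c} \<longleftrightarrow> {f u, f v} \<in> K3_E"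
      proof (intro ballI)
        fix u v assume u: "u\<in>{a,b,c}" and v: "v\<in>{a,b,c}"
        have "{u,v} \<in> P2 {a,b,c} \<longleftrightarrow> u\<noteq>v" unfolding P using tri_edge_iff[OF d u v] .
        also have "\<dots> \<longleftrightarrow> f u \<noteq> f v" using finj[OF u v] by simp
        also have "\<dots> \<longleftrightarrow> {f u, f v} \<in> K3_E" using K3_E_iff[OF fim fim] by simp
        finally show "{u, v} \<in> P2 {a,b,c} \<longleftrightarrow> {f u, f v} \<in> K3_E" .
      qed
      have gi: "graph_iso {a,b,c} (P2 {a,b,c}) K3_V K3_E"
        unfolding graph_iso_def K3_V_def apply (rule exI[of _ f]) using bij iso by simp
      have "P2 {a,b,c} \<subseteq> E" using P ed by simp
      moreover have "\<forall>e\<in>P2 {a,b,c}. e \<subseteq> {a,b,c}" by (simp add: P2_def)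
      ultimately show "p \<in> ?S" using p sub gi by simp
    qed
  qed
  moreover have "inj_on (\<lambda>T. (T, P2 T)) (tri E)" by (auto simp: inj_on_def)
  ultimately show ?thesis unfolding count_copies_def by (simp add: card_image)
qed


lemma two_elem: "card e = 2 \<Longrightarrow> a\<in>e \<Longrightarrow> b\<in>e \<Longrightarrow> a\<noteq>b \<Longrightarrow> e = {a,b}"
  by (auto simp: card_2_iff)

lemma tri_mono: "E1 \<subseteq> E \<Longrightarrow> tri E1 \<subseteq> tri E"
  unfolding tri_def by blast

lemma sg_finite: "simple_graph V E \<Longrightarrow> finite E"
proof -
  assume "simple_graph V E"
  then have "E \<subseteq> Pow V" "finite V" by (auto simp: simple_graph_def)
  then show "finite E" by (meson finite_Pow_iff finite_subset)
qed

lemma sg_edge: "simple_graph V E \<Longrightarrow> e \<in> E \<Longrightarrow> e \<subseteq> V \<and> card e = 2"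
  by (simp add: simple_graph_def)

lemma sg_pair: "simple_graph V E \<Longrightarrow> {a,b} \<in> E \<Longrightarrow> a \<noteq> b \<and> a \<in> V \<and> b \<in> V"
proof -
  assume "simple_graph V E" "{a,b} \<in> E"
  then have "{a,b} \<subseteq> V" "card {a,b} = 2" using sg_edge by blast+
  then show ?thesis by (cases "a = b") auto
qed

lemma edges_at:
  assumes "simple_graph V E"
  shows "{e\<in>E. u\<in>e} = (\<lambda>x. {u,x}) ` {x. {u,x} \<in> E}"
proof
  show "{e\<in>E. u\<in>e} \<subseteq> (\<lambda>x. {u,x}) ` {x. {u,x} \<in> E}"
  proof
    fix e assume "e \<in> {e\<in>E. u\<in>e}"
    then have e: "e \<in> E" "u \<in> e" by auto
    then have "card e = 2" using assms sg_edge by blast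
    then obtain x y where xy: "e = {x,y}" "x\<noteq>y" by (auto simp: card_2_iff)
    show "e \<in> (\<lambda>x. {u,x}) ` {x. {u,x} \<in> E}"
    proof (cases "u = x")
      case True
      then show ?thesis using xy e by blast
    next
      case False
      then have "u = y" using xy e by blast
      then have "e = {u,x}" using xy by blast
      then show ?thesis using e by blast
    qed
  qed
qed auto

lemma nbr_sub: "simple_graph V E \<Longrightarrow> {x. {u,x} \<in> E} \<subseteq> V"
  using sg_pair by fastforce

lemma arith1: "2 \<le> (n::nat) \<Longrightarrow> (n-2)^2 div 4 + (n - 1) = n^2 div 4"
proof -
  assume "2 \<le> n"
  then obtain m where m: "n = m + 2" by (metis add.commute le_Suc_ex)
  have "(m+2)^2 = m^2 + 4*(m+1)" by (simp add: power2_eq_square algebra_simps)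
  then show ?thesis using m by simp
qed

lemma mantel: "simple_graph V E \<Longrightarrow> tri E = {} \<Longrightarrow> card E \<le> card V ^ 2 div 4"
proof (induction "card V" arbitrary: V E rule: less_induct)
  case less
  note sg = less.prems(1)
  show ?case
  proof (cases "E = {}")
    case True then show ?thesis by simp
  next
    case False
    then obtain e where eE: "e\<in>E" by blast
    then have "card e = 2" using sg sg_edge by blast
    then obtain u w where uw: "e = {u,w}" "u\<noteq>w" by (auto simp: card_2_iff)
    have uwE: "{u,w} \<in> E" using eE uw by simp
    have uV: "u \<in> V" "w \<in> V" using sg_pair[OF sg uwE] by auto
    have finV: "finite V" using sg by (simp add: simple_graph_def)
    define V' where "V' = V - {u,w}"
    define E' where "E' = {e\<in>E. e \<subseteq> V'}"
    have sg': "simple_graph V' E'" using sg finV unfolding simple_graph_def E'_def V'_def by auto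
    have tri': "tri E' = {}" using tri_mono[of E' E] less.prems(2) unfolding E'_def by auto
    have cV': "card V' = card V - 2" unfolding V'_def using uV uw(2) finV
      by (simp add: card_Diff_subset)
    have n2: "2 \<le> card V"
    proof -
      have "card {u,w} \<le> card V" using uV finV by (intro card_mono) auto
      then show ?thesis using uw(2) by simp
    qed
    have IH: "card E' \<le> card V' ^2 div 4" using less.hyps[OF _ sg' tri'] cV' n2 by simp
    define Nu where "Nu = {x. {u,x} \<in> E}"
    define Nw where "Nw = {x. {w,x} \<in> E}"
    have finN: "finite Nu" "finite Nw" using nbr_sub[OF sg] finV unfolding Nu_def Nw_def
      by (meson finite_subset)+
    have dis: "Nu \<inter> Nw = {}"
    proof (rule ccontr)
      assume "Nu \<inter> Nw \<noteq> {}"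
      then obtain x where x: "{u,x} \<in> E" "{w,x} \<in> E" unfolding Nu_def Nw_def by blast
      have "u \<noteq> x" "w \<noteq> x" using sg_pair[OF sg x(1)] sg_pair[OF sg x(2)] by auto
      then have "{u,w,x} \<in> tri E" unfolding tri_def using x uwE uw(2) by blast
      then show False using less.prems(2) by simp
    qed
    have wNu: "w \<in> Nu" and uNw: "u \<in> Nw" using uwE unfolding Nu_def Nw_def by (auto simp: insert_commute)
    have sub: "E - E' \<subseteq> (\<lambda>x. {u,x}) ` Nu \<union> (\<lambda>x. {w,x}) ` (Nw - {u})"
    proof
      fix e assume e: "e \<in> E - E'"
      then have eE: "e \<in> E" and "\<not> e \<subseteq> V'" unfolding E'_def by auto
      moreover have "e \<subseteq> V" using sg_edge[OF sg eE] by simp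
      ultimately have "u \<in> e \<or> w \<in> e" unfolding V'_def by blast
      then show "e \<in> (\<lambda>x. {u,x}) ` Nu \<union> (\<lambda>x. {w,x}) ` (Nw - {u})"
      proof
        assume "u \<in> e"
        then have "e \<in> {e\<in>E. u\<in>e}" using eE by simp
        then show ?thesis unfolding edges_at[OF sg] Nu_def by blast
      next
        assume "w \<in> e"
        then have "e \<in> {e\<in>E. w\<in>e}" using eE by simp
        then obtain x where x: "e = {w,x}" "x \<in> Nw" unfolding edges_at[OF sg] Nw_def by blast
        show ?thesis
        proof (cases "x = u")
          case True
          then have "e = {u,w}" using x by auto
          then show ?thesis using wNu by blast
        next
          case False
          then show ?thesis using x by blast
        qed
      qed
    qed
    have "card (E - E') \<le> card ((\<lambda>x. {u,x}) ` Nu) + card ((\<lambda>x. {w,x}) ` (Nw - {u}))"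
      using card_mono[OF _ sub] card_Un_le finN by (meson finite_Diff finite_UnI finite_imageI order_trans)
    also have "\<dots> \<le> card Nu + card (Nw - {u})"
      using finN by (intro add_mono card_image_le) auto
    also have "\<dots> = card Nu + card Nw - 1" proof -
      have "card Nw > 0" using uNw finN card_gt_0_iff by blast
      then show ?thesis using uNw finN by (simp add: card_Diff_singleton)
    qed
    also have "card Nu + card Nw = card (Nu \<union> Nw)" using card_Un_disjoint[OF finN dis] by simp
    also have "card (Nu \<union> Nw) \<le> card V" using nbr_sub[OF sg] finV unfolding Nu_def Nw_def
      by (intro card_mono) auto
    finally have c2: "card (E - E') \<le> card V - 1" by simp
    have "E' \<subseteq> E" unfolding E'_def by auto
    then have "card E = card E' + card (E - E')" using sg_finite[OF sg]
      by (metis card_Diff_subset card_mono diff_add_inverse le_add_diff_inverse rev_finite_subset)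
    also have "\<dots> \<le> (card V - 2)^2 div 4 + (card V - 1)" using IH c2 cV' by simp
    also have "\<dots> = card V ^2 div 4" using arith1[OF n2] .
    finally show ?thesis .
  qed
qed


lemma arith2: "3 \<le> (n::nat) \<Longrightarrow> (n-3)^2 div 4 + 3 + (n-3) = (n-1)^2 div 4 + 2"
proof -
  assume "3 \<le> n"
  then obtain m where m: "n = m + 3" by (metis add.commute le_Suc_ex)
  have "(m+2)^2 = m^2 + 4*(m+1)" by (simp add: power2_eq_square algebra_simps)
  then show ?thesis using m by simp
qed

lemma tri_elim:
  assumes "T \<in> tri E"
  obtains a b c where "T = {a,b,c}" "a\<noteq>b" "a\<noteq>c" "b\<noteq>c" "{a,b}\<in>E" "{a,c}\<in>E" "{b,c}\<in>E"
  using assms unfolding tri_def by blast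

lemma tri_pairs:
  assumes "a\<noteq>b" "a\<noteq>c" "b\<noteq>c" "{a,b}\<in>E" "{a,c}\<in>E" "{b,c}\<in>E" "u \<in> {a,b,c}" "v \<in> {a,b,c}" "u \<noteq> v"
  shows "{u,v} \<in> E"
proof -
  have "{u,v} \<in> {{a,b},{a,c},{b,c}}" using tri_edge_iff[OF assms(1-3,7,8)] assms(9) by simp
  then show ?thesis using assms(4-6) by auto
qed

lemma tri_sub: "simple_graph V E \<Longrightarrow> T \<in> tri E \<Longrightarrow> T \<subseteq> V"
  by (erule tri_elim) (auto dest: sg_pair)

lemma tri_finite: "simple_graph V E \<Longrightarrow> finite (tri E)"
proof -
  assume sg: "simple_graph V E"
  then have "tri E \<subseteq> Pow V" using tri_sub by blast
  moreover have "finite V" using sg by (simp add: simple_graph_def)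
  ultimately show ?thesis by (meson finite_Pow_iff finite_subset)
qed

lemma card3le: "card {a,b,c} \<le> 3"
  by (simp add: card_insert_if)


lemma one_tri:
  assumes sg: "simple_graph V E" and t: "tri E = {T}"
  shows "card E \<le> (card V - 1)^2 div 4 + 2"
proof -
  have "T \<in> tri E" using t by simp
  then obtain x y z where T: "T = {x,y,z}" "x\<noteq>y" "x\<noteq>z" "y\<noteq>z" "{x,y}\<in>E" "{x,z}\<in>E" "{y,z}\<in>E"
    by (rule tri_elim)
  have TV: "T \<subseteq> V" using tri_sub[OF sg \<open>T \<in> tri E\<close>] .
  have finV: "finite V" using sg by (simp add: simple_graph_def)
  have cT: "card T = 3" using T by simp
  have n3: "3 \<le> card V" using card_mono[OF finV TV] cT by simp
  define V' where "V' = V - T"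
  have cV': "card V' = card V - 3" unfolding V'_def using card_Diff_subset[OF _ TV] finV cT
    by (metis finite_subset TV)
  have finV': "finite V'" using finV unfolding V'_def by simp
  define E1 where "E1 = {e\<in>E. e \<subseteq> V'}"
  define E2 where "E2 = {e\<in>E. e \<subseteq> T}"
  define E3 where "E3 = {e\<in>E. \<not> e \<subseteq> V' \<and> \<not> e \<subseteq> T}"
  have finE: "finite E" using sg_finite[OF sg] .
  have Eun: "E = E1 \<union> E2 \<union> E3" unfolding E1_def E2_def E3_def by blast
  have sg1: "simple_graph V' E1" using sg finV' unfolding simple_graph_def E1_def by auto
  have tri1: "tri E1 = {}"
  proof -
    have "tri E1 \<subseteq> {T}" using tri_mono[of E1 E] t unfolding E1_def by auto
    moreover have "T \<notin> tri E1"
    proof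
      assume "T \<in> tri E1"
      then obtain a b c where abc: "T = {a,b,c}" "{a,b} \<in> E1" by (rule tri_elim)
      then have "a \<in> V'" unfolding E1_def by auto
      then show False using abc(1) unfolding V'_def by auto
    qed
    ultimately show ?thesis by auto
  qed
  have c1: "card E1 \<le> (card V - 3)^2 div 4" using mantel[OF sg1 tri1] cV' by simp
  have "E2 \<subseteq> {{x,y},{x,z},{y,z}}"
  proof
    fix e assume "e \<in> E2"
    then have "e \<in> P2 T" using sg_edge[OF sg] unfolding E2_def P2_def by auto
    then show "e \<in> {{x,y},{x,z},{y,z}}" using P2_three[OF T(2-4)] T(1) by simp
  qed
  then have c2: "card E2 \<le> 3" using card3le card_mono by (metis finite.emptyI finite.insertI order_trans)
  define A where "A q = {e\<in>E. q \<in> e \<and> e \<inter> T \<noteq> {}}" for q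
  have E3sub: "E3 \<subseteq> (\<Union>q\<in>V'. A q)"
  proof
    fix e assume e: "e \<in> E3"
    then have eE: "e \<in> E" and n1: "\<not> e \<subseteq> V'" and n2: "\<not> e \<subseteq> T" unfolding E3_def by auto
    have eV: "e \<subseteq> V" using sg_edge[OF sg eE] by simp
    then obtain q where q: "q \<in> e" "q \<notin> T" using n2 by blast
    have "e \<inter> T \<noteq> {}" using n1 eV unfolding V'_def by blast
    then have "e \<in> A q" unfolding A_def using eE q by blast
    moreover have "q \<in> V'" using q eV unfolding V'_def by blast
    ultimately show "e \<in> (\<Union>q\<in>V'. A q)" by blast
  qed
  have cA: "card (A q) \<le> 1" if oV: "q \<in> V'" for q
  proof -
    have finA: "finite (A q)" using finE unfolding A_def by simp
    have oT: "q \<notin> T" using oV unfolding V'_def by simp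
    have "\<forall>e1\<in>A q. \<forall>e2\<in>A q. e1 = e2"
    proof (intro ballI)
      fix e1 e2 assume e1: "e1 \<in> A q" and e2: "e2 \<in> A q"
      obtain t1 where t1: "t1 \<in> e1" "t1 \<in> T" using e1 unfolding A_def by blast
      obtain t2 where t2: "t2 \<in> e2" "t2 \<in> T" using e2 unfolding A_def by blast
      have e1E: "e1 \<in> E" "q \<in> e1" and e2E: "e2 \<in> E" "q \<in> e2" using e1 e2 unfolding A_def by auto
      have e1eq: "e1 = {t1,q}" using two_elem[of e1 t1 q] sg_edge[OF sg e1E(1)] t1 e1E oT by blast
      have e2eq: "e2 = {t2,q}" using two_elem[of e2 t2 q] sg_edge[OF sg e2E(1)] t2 e2E oT by blast
      show "e1 = e2"
      proof (rule ccontr)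
        assume "e1 \<noteq> e2"
        then have tt: "t1 \<noteq> t2" using e1eq e2eq by auto
        have "{t1,t2} \<in> E" using tri_pairs[OF T(2-7)] t1(2) t2(2) tt T(1) by blast
        moreover have "t1 \<noteq> q" "t2 \<noteq> q" using t1 t2 oT by auto
        ultimately have "{t1,t2,q} \<in> tri E" unfolding tri_def using tt e1eq e2eq e1E e2E by blast
        then have "{t1,t2,q} = T" using t by simp
        then show False using oT by blast
      qed
    qed
    then show ?thesis using card_le_Suc0_iff_eq[OF finA] by simp
  qed
  have "card E3 \<le> card (\<Union>q\<in>V'. A q)"
    using E3sub finE finV' unfolding A_def by (intro card_mono) auto
  also have "\<dots> \<le> (\<Sum>q\<in>V'. card (A q))" using card_UN_le[OF finV'] .
  also have "\<dots> \<le> card V' * 1" using sum_bounded_above[of V' "\<lambda>q. card (A q)" 1] cA by simp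
  finally have c3: "card E3 \<le> card V - 3" using cV' by simp
  have "card (E1 \<union> E2 \<union> E3) \<le> card (E1 \<union> E2) + card E3" by (rule card_Un_le)
  moreover have "card (E1 \<union> E2) \<le> card E1 + card E2" by (rule card_Un_le)
  ultimately have "card E \<le> card E1 + card E2 + card E3" unfolding Eun by simp
  also have "\<dots> \<le> (card V - 3)^2 div 4 + 3 + (card V - 3)" using c1 c2 c3 by simp
  also have "\<dots> = (card V - 1)^2 div 4 + 2" using arith2[OF n3] .
  finally show ?thesis .
qed



lemma gen_bound:
  "simple_graph V E \<Longrightarrow> tri E \<noteq> {} \<Longrightarrow> card E \<le> (card V - 1)^2 div 4 + card (tri E) + 1"
proof (induction "card E" arbitrary: E rule: less_induct)
  case less
  note sg = less.prems(1)
  have finT: "finite (tri E)" using tri_finite[OF sg] .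
  have finE: "finite E" using sg_finite[OF sg] .
  show ?case
  proof (cases "card (tri E) = 1")
    case True
    then obtain T where T: "tri E = {T}" by (auto simp: card_1_singleton_iff)
    have "card E \<le> (card V - 1)^2 div 4 + 2" by (rule one_tri[OF sg T])
    then show ?thesis using True by simp
  next
    case False
    have "card (tri E) \<noteq> 0" using less.prems(2) finT by simp
    then have "\<not> card (tri E) \<le> Suc 0" using False by linarith
    then have "\<not> (\<forall>a1 \<in> tri E. \<forall>a2 \<in> tri E. a1 = a2)" using card_le_Suc0_iff_eq[OF finT] by simp
    then obtain T1 T2 where T12: "T1 \<in> tri E" "T2 \<in> tri E" "T1 \<noteq> T2" by blast
    obtain a b c where T1: "T1 = {a,b,c}" "a\<noteq>b" "a\<noteq>c" "b\<noteq>c" "{a,b}\<in>E" "{a,c}\<in>E" "{b,c}\<in>E"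
      using T12(1) by (rule tri_elim)
    have finT2: "finite T2" using tri_sub[OF sg T12(2)] sg by (meson finite_subset simple_graph_def)
    have cT2: "card T2 = 3" using T12(2) by (rule tri_elim) auto
    have "\<not> ({a,b} \<subseteq> T2 \<and> {a,c} \<subseteq> T2)"
    proof
      assume "{a,b} \<subseteq> T2 \<and> {a,c} \<subseteq> T2"
      then have "T1 \<subseteq> T2" using T1(1) by blast
      moreover have "card T1 = 3" using T1 by simp
      ultimately have "T1 = T2" using card_subset_eq[OF finT2] cT2 by simp
      then show False using T12(3) by simp
    qed
    then obtain f where f: "f \<in> E" "f \<subseteq> T1" "\<not> f \<subseteq> T2"
      using T1 by blast
    define E' where "E' = E - {f}"
    have cpos: "card E > 0" using f(1) finE card_gt_0_iff by blast
    have cE'': "card E = card E' + 1" unfolding E'_def using f(1) finE cpos by (simp add: card_Diff_singleton)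
    have cE': "card E' < card E" using cE'' by simp
    have sg': "simple_graph V E'" using sg unfolding simple_graph_def E'_def by auto
    have T2': "T2 \<in> tri E'"
    proof -
      obtain p q r where T2: "T2 = {p,q,r}" "p\<noteq>q" "p\<noteq>r" "q\<noteq>r" "{p,q}\<in>E" "{p,r}\<in>E" "{q,r}\<in>E"
        using T12(2) by (rule tri_elim)
      have "{p,q} \<noteq> f" "{p,r} \<noteq> f" "{q,r} \<noteq> f" using f(3) T2(1) by auto
      then have "{p,q}\<in>E'" "{p,r}\<in>E'" "{q,r}\<in>E'" using T2(5-7) unfolding E'_def by auto
      then show ?thesis unfolding tri_def using T2(1-4) by blast
    qed
    have T1': "T1 \<notin> tri E'"
    proof
      assume "T1 \<in> tri E'"
      then obtain p q r where T: "T1 = {p,q,r}" "p\<noteq>q" "p\<noteq>r" "q\<noteq>r" "{p,q}\<in>E'" "{p,r}\<in>E'" "{q,r}\<in>E'"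
        by (rule tri_elim)
      have "f \<in> P2 {p,q,r}" using f(1,2) T(1) sg_edge[OF sg] unfolding P2_def by auto
      then have "f \<in> {{p,q},{p,r},{q,r}}" using P2_three[OF T(2-4)] by simp
      then have "f \<in> E'" using T(5-7) by auto
      then show False unfolding E'_def by simp
    qed
    have "tri E' \<subseteq> tri E" using tri_mono[of E' E] unfolding E'_def by blast
    then have sub: "tri E' \<subseteq> tri E - {T1}" using T1' by blast
    have ct: "card (tri E') + 1 \<le> card (tri E)"
    proof -
      have p: "card (tri E) > 0" using T12(1) finT card_gt_0_iff by blast
      have f2: "finite (tri E - {T1})" using finT by simp
      have c1: "card (tri E') \<le> card (tri E - {T1})" using card_mono[OF f2 sub] .
      have c2: "card (tri E - {T1}) = card (tri E) - 1" using T12(1) finT by (simp add: card_Diff_singleton)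
      show ?thesis using p c1 c2 by linarith
    qed
    have "tri E' \<noteq> {}" using T2' by auto
    then have "card E' \<le> (card V - 1)^2 div 4 + card (tri E') + 1" using less.hyps[OF cE' sg'] by simp
    then show ?thesis using cE'' ct by simp
  qed
qed



lemma arith3: "(m::nat) div 2 * (m - m div 2) = m^2 div 4"
proof (cases "even m")
  case True
  then obtain p where "m = 2*p" by blast
  then show ?thesis by (simp add: power2_eq_square)
next
  case False
  then obtain p where m: "m = 2*p+1" using oddE by blast
  have "m^2 = 4*(p*p+p) + 1" using m by (simp add: power2_eq_square algebra_simps)
  then have "m^2 div 4 = p*p+p" by simp
  moreover have "m div 2 = p" using m by simp
  moreover have "m - m div 2 = p + 1" using m by simp
  ultimately show ?thesis by (simp add: algebra_simps)
qed

lemma pair_cancel: "{v,q} = {v,w} \<Longrightarrow> w \<noteq> v \<Longrightarrow> q = w"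
  by (metis doubleton_eq_iff)

lemma constr:
  assumes n: "2*k+3 \<le> n"
  shows "\<exists>E. simple_graph {..<n} E \<and> card (tri E) = k \<and> card E = (n-1)^2 div 4 + k + 1"
proof -
  define a where "a = (n-1) div 2"
  define v where "v = n - 1"
  define A where "A = {..<a}"
  define B where "B = {a..<v}"
  define Eb where "Eb = (\<lambda>(x,y). {x,y}) ` (A \<times> B)"
  define Ev where "Ev = (\<lambda>j. {v, a+j}) ` {..<k}"
  define E where "E = Eb \<union> ({{v,0}} \<union> Ev)"
  have a1: "1 \<le> a" using n unfolding a_def by simp
  have akv: "a + k < v" using n unfolding a_def v_def by linarith
  have vn: "v < n" "0 < v" using n unfolding v_def by auto
  have finA: "finite A" and finB: "finite B" unfolding A_def B_def by auto
  have bip: "(p < a) \<longleftrightarrow> \<not> (q < a)" if h: "{p,q} \<in> Eb" for p q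
  proof -
    obtain pr where pr: "pr \<in> A \<times> B" "{p,q} = (\<lambda>(x,y). {x,y}) pr" using h unfolding Eb_def by (rule imageE)
    obtain x y where "pr = (x,y)" by (cases pr)
    then have "x \<in> A" "y \<in> B" "{p,q} = {x,y}" using pr by auto
    then show ?thesis unfolding A_def B_def by (auto simp: doubleton_eq_iff)
  qed
  have bipV: "e \<subseteq> {..<v}" if "e \<in> Eb" for e
    using that unfolding Eb_def A_def B_def using akv by auto
  have vedge: "q = 0 \<or> (\<exists>j<k. q = a + j)" if "{v,q} \<in> E" for q
  proof -
    have "{v,q} \<notin> Eb"
    proof
      assume "{v,q} \<in> Eb"
      then have "{v,q} \<subseteq> {..<v}" by (rule bipV)
      then show False by simp
    qed
    then have "{v,q} = {v,0} \<or> {v,q} \<in> Ev" using that unfolding E_def by (metis UnE singletonD)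
    then show ?thesis
    proof
      assume "{v,q} = {v,0}"
      then show ?thesis using pair_cancel[of v q 0] vn(2) by simp
    next
      assume "{v,q} \<in> Ev"
      then obtain j where j: "j<k" "{v,q} = {v,a+j}" unfolding Ev_def by blast
      have "a+j \<noteq> v" using j akv by simp
      then show ?thesis using pair_cancel[of v q "a+j"] j by auto
    qed
  qed
  have allv: "\<forall>e\<in>{{v,0}} \<union> Ev. v \<in> e" unfolding Ev_def by auto
  have nonv: "{p,q} \<in> Eb" if "{p,q} \<in> E" "p \<noteq> v" "q \<noteq> v" for p q
  proof -
    have "v \<notin> {p,q}" using that by simp
    then show ?thesis using that(1) allv unfolding E_def by (metis UnE)
  qed
  have vtri: "{v,q,r} \<in> (\<lambda>j. {v,0,a+j}) ` {..<k}"
    if h: "{v,q} \<in> E" "{v,r} \<in> E" "{q,r} \<in> E" "q \<noteq> r" "q \<noteq> v" "r \<noteq> v" for q r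
  proof -
    have "{q,r} \<in> Eb" using nonv[OF h(3) h(5) h(6)] .
    then have b: "(q < a) \<longleftrightarrow> \<not> (r < a)" by (rule bip)
    have q: "q = 0 \<or> (\<exists>j<k. q = a + j)" using vedge h(1) .
    have r: "r = 0 \<or> (\<exists>j<k. r = a + j)" using vedge h(2) .
    show ?thesis
    proof (cases "q = 0")
      case True
      then obtain j where j: "j<k" "r = a + j" using r h(4) by auto
      then have "{v,q,r} = {v,0,a+j}" using True by simp
      then show ?thesis using j by (intro image_eqI[where x=j]) auto
    next
      case False
      then obtain j where j: "j<k" "q = a + j" using q by auto
      then have "r = 0" using r b by auto
      then have "{v,q,r} = {v,0,a+j}" using j by (simp add: insert_commute)
      then show ?thesis using j by (intro image_eqI[where x=j]) auto
    qed
  qed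
  have triE: "tri E = (\<lambda>j. {v,0,a+j}) ` {..<k}"
  proof
    show "tri E \<subseteq> (\<lambda>j. {v,0,a+j}) ` {..<k}"
    proof
      fix T assume "T \<in> tri E"
      then obtain p q r where T: "T = {p,q,r}" "p\<noteq>q" "p\<noteq>r" "q\<noteq>r" "{p,q}\<in>E" "{p,r}\<in>E" "{q,r}\<in>E"
        by (rule tri_elim)
      have "p = v \<or> q = v \<or> r = v"
      proof (rule ccontr)
        assume "\<not> (p = v \<or> q = v \<or> r = v)"
        then have "p \<noteq> v" "q \<noteq> v" "r \<noteq> v" by auto
        then have e: "{p,q} \<in> Eb" "{p,r} \<in> Eb" "{q,r} \<in> Eb" using nonv T(5-7) by auto
        show False using bip[OF e(1)] bip[OF e(2)] bip[OF e(3)] by blast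
      qed
      then show "T \<in> (\<lambda>j. {v,0,a+j}) ` {..<k}"
      proof (elim disjE)
        assume pv: "p = v"
        have "{v,q,r} \<in> (\<lambda>j. {v,0,a+j}) ` {..<k}" by (rule vtri) (use T pv in auto)
        then show ?thesis using T(1) pv by simp
      next
        assume qv: "q = v"
        have "T = {v,p,r}" using T(1) qv by (simp add: insert_commute)
        moreover have "{v,p} \<in> E" using T(5) qv by (simp add: insert_commute)
        moreover have "{v,p,r} \<in> (\<lambda>j. {v,0,a+j}) ` {..<k}" by (rule vtri) (use T qv calculation in auto)
        ultimately show ?thesis by simp
      next
        assume rv: "r = v"
        have "T = {v,p,q}" using T(1) rv by (simp add: insert_commute)
        moreover have "{v,p} \<in> E" "{v,q} \<in> E" using T(6,7) rv by (simp_all add: insert_commute)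
        moreover have "{v,p,q} \<in> (\<lambda>j. {v,0,a+j}) ` {..<k}" by (rule vtri) (use T rv calculation in auto)
        ultimately show ?thesis by simp
      qed
    qed
  next
    show "(\<lambda>j. {v,0,a+j}) ` {..<k} \<subseteq> tri E"
    proof
      fix T assume "T \<in> (\<lambda>j. {v,0,a+j}) ` {..<k}"
      then obtain j where j: "T = {v,0,a+j}" "j \<in> {..<k}" by (rule imageE)
      have e1: "{v,0} \<in> E" unfolding E_def by simp
      have "{v,a+j} \<in> Ev" unfolding Ev_def using j(2) by (intro image_eqI[where x=j]) auto
      then have e2: "{v,a+j} \<in> E" unfolding E_def by simp
      have "(0, a+j) \<in> A \<times> B" unfolding A_def B_def using a1 akv j(2) by auto
      then have "{0,a+j} \<in> Eb" unfolding Eb_def by (intro image_eqI[where x="(0,a+j)"]) auto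
      then have e3: "{0,a+j} \<in> E" unfolding E_def by simp
      have d: "v \<noteq> 0" "v \<noteq> a+j" "(0::nat) \<noteq> a+j" using vn akv j(2) a1 by auto
      have "\<exists>x y z. T = {x,y,z} \<and> x\<noteq>y \<and> x\<noteq>z \<and> y\<noteq>z \<and> {x,y}\<in>E \<and> {x,z}\<in>E \<and> {y,z}\<in>E"
        by (rule exI[of _ v], rule exI[of _ 0], rule exI[of _ "a+j"]) (use j(1) d e1 e2 e3 in simp)
      then show "T \<in> tri E" unfolding tri_def by simp
    qed
  qed
  have ctri: "card (tri E) = k"
  proof -
    have "inj_on (\<lambda>j. {v,0,a+j}) {..<k}"
    proof (rule inj_onI)
      fix i j assume i: "i \<in> {..<k}" and j: "j \<in> {..<k}" and eq: "{v,0,a+i} = {v,0,a+j}"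
      have "a + i \<in> {v,0,a+i}" by simp
      then have "a + i \<in> {v,0,a+j}" by (simp only: eq)
      moreover have "a + i \<noteq> v" "a + i \<noteq> 0" using i akv a1 by auto
      ultimately show "i = j" by auto
    qed
    then show ?thesis unfolding triE by (simp add: card_image)
  qed
  have sgE: "\<forall>e\<in>E. e \<subseteq> {..<n} \<and> card e = 2"
  proof
    fix e assume "e \<in> E"
    then have "e \<in> Eb \<or> e = {v,0} \<or> e \<in> Ev" unfolding E_def by (metis UnE singletonD)
    then show "e \<subseteq> {..<n} \<and> card e = 2"
    proof (elim disjE)
      assume "e \<in> Eb"
      then have "e \<subseteq> {..<v}" by (rule bipV)
      then have "e \<subseteq> {..<n}" using vn by auto
      moreover obtain pr where pr: "pr \<in> A \<times> B" "e = (\<lambda>(x,y). {x,y}) pr" using \<open>e \<in> Eb\<close> unfolding Eb_def by (rule imageE)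
      moreover obtain x y where "pr = (x,y)" by (cases pr)
      ultimately have "e = {x,y}" "x < a" "a \<le> y" "e \<subseteq> {..<n}" unfolding A_def B_def by auto
      then show ?thesis by auto
    next
      assume "e = {v,0}" then show ?thesis using vn by auto
    next
      assume "e \<in> Ev"
      then obtain j where "e = {v,a+j}" "j \<in> {..<k}" unfolding Ev_def by (rule imageE)
      then show ?thesis using vn akv by auto
    qed
  qed
  have sg: "simple_graph {..<n} E" unfolding simple_graph_def using sgE by simp
  have cEb: "card Eb = a * (v - a)"
  proof -
    have "inj_on (\<lambda>(x,y). {x,y}) (A \<times> B)"
    proof (rule inj_onI)
      fix p1 p2 assume p1: "p1 \<in> A \<times> B" and p2: "p2 \<in> A \<times> B"
        and eq: "(\<lambda>(x,y). {x,y}) p1 = (\<lambda>(x,y). {x,y}) p2"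
      obtain x1 y1 where 1: "p1 = (x1,y1)" by (cases p1)
      obtain x2 y2 where 2: "p2 = (x2,y2)" by (cases p2)
      have xy: "x1 < a" "a \<le> y1" "x2 < a" "a \<le> y2" using p1 p2 1 2 unfolding A_def B_def by auto
      have "{x1,y1} = {x2,y2}" using eq 1 2 by simp
      then have "x1 = x2 \<and> y1 = y2" using xy by (auto simp: doubleton_eq_iff)
      then show "p1 = p2" using 1 2 by simp
    qed
    then have "card Eb = card (A \<times> B)" unfolding Eb_def by (simp add: card_image)
    also have "\<dots> = a * (v - a)" unfolding A_def B_def by simp
    finally show ?thesis .
  qed
  have cEv: "card Ev = k"
  proof -
    have "inj_on (\<lambda>j. {v, a+j}) {..<k}"
    proof (rule inj_onI)
      fix i j assume i: "i \<in> {..<k}" and j: "j \<in> {..<k}" and eq: "{v,a+i} = {v,a+j}"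
      have "a+j \<noteq> v" using j akv by simp
      then have "a+i = a+j" using pair_cancel[OF eq] by simp
      then show "i = j" by simp
    qed
    then show ?thesis unfolding Ev_def by (simp add: card_image)
  qed
  have finEb: "finite Eb" unfolding Eb_def using finA finB by simp
  have finEv: "finite Ev" unfolding Ev_def by simp
  have d1: "{v,0} \<notin> Ev"
  proof
    assume "{v,0} \<in> Ev"
    then obtain j where j: "{v,0} = {v,a+j}" "j \<in> {..<k}" unfolding Ev_def by (rule imageE)
    have "a+j \<noteq> v" using j(2) akv by simp
    then have "0 = a + j" using pair_cancel[OF j(1)] by simp
    then show False using a1 by simp
  qed
  have d2: "Eb \<inter> ({{v,0}} \<union> Ev) = {}"
  proof -
    have h1: "\<forall>e\<in>Eb. v \<notin> e" using bipV by auto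
    show ?thesis unfolding disjoint_iff using h1 allv by metis
  qed
  have "card E = card Eb + card ({{v,0}} \<union> Ev)" unfolding E_def
    using card_Un_disjoint[OF finEb _ d2] finEv by simp
  also have "card ({{v,0}} \<union> Ev) = 1 + card Ev" using d1 finEv by simp
  also have "card Eb + (1 + card Ev) = (n-1)^2 div 4 + k + 1"
    using cEb cEv arith3[of "n-1"] unfolding a_def v_def by simp
  finally show ?thesis using sg ctri by blast
qed



lemma floor_eq: "1 \<le> n \<Longrightarrow> \<lfloor>(real n - 1)^2 / 4\<rfloor> = int ((n-1)^2 div 4)"
proof -
  assume "1 \<le> n"
  then have h: "real n - 1 = real (n-1)" by (simp add: of_nat_diff)
  have eq: "(real n - 1)^2 / 4 = real ((n-1)^2) / real (4::nat)" unfolding h of_nat_power by simp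
  show ?thesis unfolding eq by (rule floor_divide_of_nat_eq)
qed

theorem theorem1p5:
  fixes k :: nat
  assumes "k \<ge> 1"
  shows "\<exists>n0. \<forall>n\<ge>n0. exa_candidates k n K3_V K3_E \<noteq> {} \<and>
           int (exa k n K3_V K3_E) = \<lfloor>(real n - 1)^2 / 4\<rfloor> + int k + 1"
proof -
  have main: "exa_candidates k n K3_V K3_E \<noteq> {} \<and>
           int (exa k n K3_V K3_E) = \<lfloor>(real n - 1)^2 / 4\<rfloor> + int k + 1" if n: "2*k+3 \<le> n" for n
  proof -
    let ?M = "(n-1)^2 div 4"
    obtain E0 where E0: "simple_graph {..<n} E0" "card (tri E0) = k" "card E0 = ?M + k + 1"
      using constr[OF n] by blast
    have "\<exists>E. ?M + k + 1 = card E \<and> simple_graph {..<n} E \<and> count_copies {..<n} E K3_V K3_E = k"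
      by (intro exI[of _ E0]) (simp add: E0 count_tri[OF E0(1)])
    then have mem: "?M + k + 1 \<in> exa_candidates k n K3_V K3_E" unfolding exa_candidates_def by simp
    have ub: "c \<le> ?M + k + 1" if c: "c \<in> exa_candidates k n K3_V K3_E" for c
    proof -
      have "\<exists>E. c = card E \<and> simple_graph {..<n} E \<and> count_copies {..<n} E K3_V K3_E = k"
        using c unfolding exa_candidates_def by simp
      then obtain E where E: "c = card E" "simple_graph {..<n} E" "count_copies {..<n} E K3_V K3_E = k"
        by (elim exE conjE)
      have t: "card (tri E) = k" using E count_tri[OF E(2)] by simp
      then have "tri E \<noteq> {}" using assms by auto
      then have "card E \<le> (card {..<n} - 1)^2 div 4 + card (tri E) + 1" using gen_bound[OF E(2)] by simp
      then show ?thesis using E(1) t by simp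
    qed
    have fin: "finite (exa_candidates k n K3_V K3_E)"
    proof (rule finite_subset[of _ "{..?M + k + 1}"])
      show "exa_candidates k n K3_V K3_E \<subseteq> {..?M + k + 1}" using ub by (simp add: subset_iff)
    qed simp
    have "exa k n K3_V K3_E = ?M + k + 1" unfolding exa_def by (rule Max_eqI[OF fin ub mem])
    moreover have "\<lfloor>(real n - 1)^2 / 4\<rfloor> = int ?M" using n floor_eq[of n] by simp
    moreover have "exa_candidates k n K3_V K3_E \<noteq> {}" using mem by (metis empty_iff)
    ultimately show ?thesis by simp
  qed
  have "\<forall>n\<ge>2*k+3. exa_candidates k n K3_V K3_E \<noteq> {} \<and>
           int (exa k n K3_V K3_E) = \<lfloor>(real n - 1)^2 / 4\<rfloor> + int k + 1" using main by simp
  then show ?thesis by (rule exI)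
qed

end
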